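(* Let $p_0>2$ be a rational number with continued fraction expansion $$p_0=\nu_1+\cfrac{1}{\nu_2+\cfrac{1}{\ddots+\cfrac{1}{\nu_\alpha}}},\qquad \alpha\ge1,\ \nu_1,\dots,\nu_\alpha\in\mathbb{Z}_{\ge1}.$$ Define $y_{-1}=0,\ y_0=1,\ z_{-1}=1,\ z_0=0$ and $y_j=y_{j-2}+\nu_jy_{j-1}$, $z_j=z_{j-2}+\nu_jz_{j-1}$ for $1\le j\le\alpha$. Let $\theta=\pi/p_0$, let $N$ be an even positive integer, $u\in\mathbb{C}$, $m\in\{0,1,\dots,N/2\}$, and let $\omega_1,\dots,\omega_m$ solve the Bethe ansatz equations $$-\Biggl(\frac{\sinh\frac{\theta}{2}\bigl(\omega_j+i(u+2)\bigr)\sinh\frac{\theta}{2}(\omega_j-iu)}{\sinh\frac{\theta}{2}\bigl(\omega_j-i(u+2)\bigr)\sinh\frac{\theta}{2}(\omega_j+iu)}\Biggr)^{N/2}=\frac{Q(\omega_j+2i)}{Q(\omega_j-2i)},\qquad j=1,\dots,m,$$ where $Q(v)=\prod_{k=1}^m\sinh\frac{\theta}{2}(v-\omega_k)$. For integers $n\ge0$ let $$T_{n-1}(v)=\sum_{j=1}^{n}\phi\bigl(v-i(u+n+2-2j)\bigr)\phi\bigl(v+i(u-n+2j)\bigr)\frac{Q(v+in)Q(v-in)}{Q\bigl(v+i(2j-n)\bigr)Q\bigl(v+i(2j-n-2)\bigr)},\quad \phi(v)=\Bigl(\frac{\sinh\frac{\theta}{2}v}{\sin\theta}\Bigr)^{N/2}.$$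 Then, as an identity of meromorphic functions of $v$, $$T_{y_\alpha+y_{\alpha-1}-1}(v)=T_{y_\alpha-y_{\alpha-1}-1}(v)+2(-1)^{mz_\alpha}\,T_{y_{\alpha-1}-1}(v+iy_\alpha).$$
   Context: $T_{n-1}(v)$ are the eigenvalues (dressed vacuum form) of the fusion hierarchy of quantum transfer matrices of the six-vertex model related to the XXZ chain with $\Delta=\cos(\pi/p_0)$; $\sinh$ is the hyperbolic sine. The numbers $y_j,z_j$ are the Takahashi–Suzuki data attached to $p_0$. *)

theory Defs
  imports "HOL-Analysis.Analysis"
begin

text \<open>Finite continued fraction: cfr nu i k = nu_i + 1/(nu_(i+1) + ... + 1/nu_(i+k)).
  So p0 = [nu_1; nu_2, ..., nu_alpha] is cfr nu 1 (alpha - 1).\<close>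
fun cfr :: "(nat \<Rightarrow> nat) \<Rightarrow> nat \<Rightarrow> nat \<Rightarrow> real" where
  "cfr nu i 0 = real (nu i)"
| "cfr nu i (Suc k) = real (nu i) + 1 / cfr nu (Suc i) k"

text \<open>Takahashi--Suzuki numbers, shifted by one: ts_y nu (j+1) = y_j, ts_z nu (j+1) = z_j
  (so ts_y nu 0 = y_(-1) = 0, ts_y nu 1 = y_0 = 1, ts_z nu 0 = z_(-1) = 1, ts_z nu 1 = z_0 = 0).\<close>
fun ts_y :: "(nat \<Rightarrow> nat) \<Rightarrow> nat \<Rightarrow> nat" where
  "ts_y nu 0 = 0"
| "ts_y nu (Suc 0) = 1"
| "ts_y nu (Suc (Suc j)) = ts_y nu j + nu (Suc j) * ts_y nu (Suc j)"

fun ts_z :: "(nat \<Rightarrow> nat) \<Rightarrow> nat \<Rightarrow> nat" where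
  "ts_z nu 0 = 1"
| "ts_z nu (Suc 0) = 0"
| "ts_z nu (Suc (Suc j)) = ts_z nu j + nu (Suc j) * ts_z nu (Suc j)"

definition Qfun :: "real \<Rightarrow> nat \<Rightarrow> (nat \<Rightarrow> complex) \<Rightarrow> complex \<Rightarrow> complex" where
  "Qfun \<theta> m \<omega> v = (\<Prod>k=1..m. sinh (complex_of_real (\<theta>/2) * (v - \<omega> k)))"

definition phi :: "real \<Rightarrow> nat \<Rightarrow> complex \<Rightarrow> complex" where
  "phi \<theta> N v = (sinh (complex_of_real (\<theta>/2) * v) / complex_of_real (sin \<theta>)) ^ (N div 2)"

text \<open>Tfun \<theta> N u m \<omega> n v is T_(n-1)(v) (dressed vacuum form); T_(-1) = 0.\<close>
definition Tfun :: "real \<Rightarrow> nat \<Rightarrow> complex \<Rightarrow> nat \<Rightarrow> (nat \<Rightarrow> complex) \<Rightarrow> nat \<Rightarrow> complex \<Rightarrow> complex" where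
  "Tfun \<theta> N u m \<omega> n v =
     (\<Sum>j=1..n.
        phi \<theta> N (v - \<i> * (u + of_nat n + 2 - 2 * of_nat j))
      * phi \<theta> N (v + \<i> * (u - of_nat n + 2 * of_nat j))
      * (Qfun \<theta> m \<omega> (v + \<i> * of_nat n) * Qfun \<theta> m \<omega> (v - \<i> * of_nat n))
      / (Qfun \<theta> m \<omega> (v + \<i> * (2 * of_nat j - of_nat n))
         * Qfun \<theta> m \<omega> (v + \<i> * (2 * of_nat j - of_nat n - 2))))"

end

theory Submission
  imports Defs
begin

lemma comb:
  fixes h :: "int \<Rightarrow> 'a::comm_ring_1"
  assumes per: "\<And>k. h (k + 2 * int p) = h k" and pq: "p = q + r"
  shows "(\<Sum>j=1..q+r+q. h (2*int j - int (q+r+q) - 1))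
       = (\<Sum>j=1..r. h (2*int j - int r - 1)) + 2 * (\<Sum>j=1..q. h (int p + 2*int j - int q - 1))"
proof -
  have s1: "(\<Sum>j=1..q+r+q. h (2*int j - int (q+r+q) - 1))
     = (\<Sum>j=1..q. h (2*int j - int (q+r+q) - 1)) + (\<Sum>j=q+1..q+(r+q). h (2*int j - int (q+r+q) - 1))"
    using sum.ub_add_nat[of 1 q "\<lambda>j. h (2*int j - int (q+r+q) - 1)" "r+q"] by (simp add: add.assoc)
  have s2: "(\<Sum>j=q+1..q+(r+q). h (2*int j - int (q+r+q) - 1))
     = (\<Sum>j=q+1..q+r. h (2*int j - int (q+r+q) - 1)) + (\<Sum>j=q+r+1..q+r+q. h (2*int j - int (q+r+q) - 1))"
    using sum.ub_add_nat[of "q+1" "q+r" "\<lambda>j. h (2*int j - int (q+r+q) - 1)" q] by (simp add: add.assoc)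
  have s3: "(\<Sum>j=q+1..q+r. h (2*int j - int (q+r+q) - 1)) = (\<Sum>j=1..r. h (2*int j - int r - 1))"
  proof -
    have "(\<Sum>j=q+1..q+r. h (2*int j - int (q+r+q) - 1)) = (\<Sum>j=1+q..r+q. h (2*int j - int (q+r+q) - 1))"
      by (simp add: add.commute)
    also have "\<dots> = (\<Sum>j=1..r. h (2*int (j+q) - int (q+r+q) - 1))"
      by (rule sum.shift_bounds_cl_nat_ivl)
    also have "\<dots> = (\<Sum>j=1..r. h (2*int j - int r - 1))"
      by (rule sum.cong) (auto simp: algebra_simps)
    finally show ?thesis .
  qed
  have s4: "(\<Sum>j=q+r+1..q+r+q. h (2*int j - int (q+r+q) - 1)) = (\<Sum>j=1..q. h (int p + 2*int j - int q - 1))"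
  proof -
    have "(\<Sum>j=q+r+1..q+r+q. h (2*int j - int (q+r+q) - 1)) = (\<Sum>j=1+(q+r)..q+(q+r). h (2*int j - int (q+r+q) - 1))"
      by (simp add: add.commute)
    also have "\<dots> = (\<Sum>j=1..q. h (2*int (j+(q+r)) - int (q+r+q) - 1))"
      by (rule sum.shift_bounds_cl_nat_ivl)
    also have "\<dots> = (\<Sum>j=1..q. h (int p + 2*int j - int q - 1))"
      by (rule sum.cong) (auto simp: algebra_simps pq)
    finally show ?thesis .
  qed
  have s5: "(\<Sum>j=1..q. h (2*int j - int (q+r+q) - 1)) = (\<Sum>j=1..q. h (int p + 2*int j - int q - 1))"
  proof (rule sum.cong)
    fix j assume "j \<in> {1..q}"
    have "h (2*int j - int (q+r+q) - 1) = h ((2*int j - int (q+r+q) - 1) + 2 * int p)"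
      by (rule per[symmetric])
    also have "(2*int j - int (q+r+q) - 1) + 2 * int p = int p + 2*int j - int q - 1"
      by (simp add: pq algebra_simps)
    finally show "h (2*int j - int (q+r+q) - 1) = h (int p + 2*int j - int q - 1)" .
  qed simp
  have gen: "\<And>a b::'a. a + (b + a) = b + 2*a" by (simp add: algebra_simps mult_2)
  show ?thesis unfolding s1 s2 s3 s4 s5 by (rule gen)
qed


lemma ts_shift:
  "ts_y nu (Suc n) = nu 1 * ts_y (\<lambda>j. nu (Suc j)) n + ts_z (\<lambda>j. nu (Suc j)) n
   \<and> ts_z nu (Suc n) = ts_y (\<lambda>j. nu (Suc j)) n"
proof (induction n rule: less_induct)
  case (less n)
  show ?case
  proof (cases n)
    case 0 then show ?thesis by simp
  next
    case (Suc k) note k = this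
    show ?thesis
    proof (cases k)
      case 0 then show ?thesis using k by simp
    next
      case (Suc l)
      let ?Y = "ts_y (\<lambda>j. nu (Suc j))" and ?Z = "ts_z (\<lambda>j. nu (Suc j))"
      have a: "ts_y nu (Suc l) = nu 1 * ?Y l + ?Z l \<and> ts_z nu (Suc l) = ?Y l"
        using less k Suc by auto
      have b: "ts_y nu (Suc (Suc l)) = nu 1 * ?Y (Suc l) + ?Z (Suc l)
          \<and> ts_z nu (Suc (Suc l)) = ?Y (Suc l)"
        using less[of "Suc l"] k Suc by auto
      have e1: "ts_y nu (Suc (Suc (Suc l))) = ts_y nu (Suc l) + nu (Suc (Suc l)) * ts_y nu (Suc (Suc l))"
        by (rule ts_y.simps(3))
      have e2: "ts_z nu (Suc (Suc (Suc l))) = ts_z nu (Suc l) + nu (Suc (Suc l)) * ts_z nu (Suc (Suc l))"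
        by (rule ts_z.simps(3))
      have e3: "?Y (Suc (Suc l)) = ?Y l + nu (Suc (Suc l)) * ?Y (Suc l)"
        by (rule ts_y.simps(3))
      have e4: "?Z (Suc (Suc l)) = ?Z l + nu (Suc (Suc l)) * ?Z (Suc l)"
        by (rule ts_z.simps(3))
      have "ts_y nu (Suc (Suc (Suc l))) = nu 1 * ?Y (Suc (Suc l)) + ?Z (Suc (Suc l))"
        unfolding e1 e3 e4 using a b by (simp add: algebra_simps del: ts_y.simps ts_z.simps)
      moreover have "ts_z nu (Suc (Suc (Suc l))) = ?Y (Suc (Suc l))"
        unfolding e2 e3 using a b by (simp del: ts_y.simps ts_z.simps)
      ultimately show ?thesis using k Suc by simp
    qed
  qed
qed


lemma ts_y_pos: "(\<forall>j\<in>{1..n}. nu j \<ge> 1) \<Longrightarrow> ts_y nu (Suc n) \<ge> 1"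
proof (induction n)
  case 0 then show ?case by simp
next
  case (Suc n)
  have "ts_y nu (Suc n) \<ge> 1" using Suc by auto
  moreover have "nu (Suc n) \<ge> 1" using Suc.prems by auto
  ultimately have "nu (Suc n) * ts_y nu (Suc n) \<ge> 1" by (metis mult_le_mono nat_mult_1)
  then show ?case by (simp add: trans_le_add2)
qed


lemma cfr_shift: "cfr nu (Suc i) k = cfr (\<lambda>j. nu (Suc j)) i k"
  by (induction k arbitrary: i) auto


lemma cfr_ts: "(\<forall>j\<in>{1..Suc k}. nu j \<ge> 1) \<Longrightarrow>
   cfr nu 1 k = real (ts_y nu (Suc (Suc k))) / real (ts_z nu (Suc (Suc k)))"
proof (induction k arbitrary: nu)
  case 0 then show ?case by simp
next
  case (Suc k)
  let ?s = "\<lambda>j. nu (Suc j)"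
  have hs: "\<forall>j\<in>{1..Suc k}. ?s j \<ge> 1" using Suc.prems by auto
  have ih: "cfr ?s 1 k = real (ts_y ?s (Suc (Suc k))) / real (ts_z ?s (Suc (Suc k)))"
    by (rule Suc.IH[OF hs])
  have pos: "ts_y ?s (Suc (Suc k)) \<ge> 1" using ts_y_pos[OF hs] .
  have e1: "cfr nu 1 (Suc k) = real (nu 1) + 1 / cfr ?s 1 k"
    using cfr_shift[of nu 1 k] by (simp add: numeral_2_eq_2)
  have e2: "ts_y nu (Suc (Suc (Suc k))) = nu 1 * ts_y ?s (Suc (Suc k)) + ts_z ?s (Suc (Suc k))"
    and e3: "ts_z nu (Suc (Suc (Suc k))) = ts_y ?s (Suc (Suc k))"
    using ts_shift[of nu "Suc (Suc k)"] by auto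
  have gen: "\<And>(a::real) Y Z. Y \<noteq> 0 \<Longrightarrow> a + 1 / (Y / Z) = (a * Y + Z) / Y"
    by (simp add: field_simps)
  have "real (ts_y ?s (Suc (Suc k))) \<noteq> 0" using pos by (simp del: ts_y.simps ts_z.simps)
  from gen[OF this, of "real (nu 1)" "real (ts_z ?s (Suc (Suc k)))"]
  show ?case unfolding e1 e2 e3 ih by (simp del: ts_y.simps ts_z.simps)
qed



lemma sq_sign: "((-1::complex)^k) * ((-1)^k) = 1"
  by (simp add: power_add[symmetric] flip: power_mult_distrib)

lemma sinh_shift:
  fixes \<theta> :: real and p z :: nat and x :: complex
  assumes h: "\<theta> * real p = pi * real z"
  shows "sinh (complex_of_real (\<theta>/2) * (x + 2 * \<i> * of_nat p)) = (-1)^z * sinh (complex_of_real (\<theta>/2) * x)"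
proof -
  let ?c = "complex_of_real (\<theta>/2)"
  let ?b = "of_nat z * (complex_of_real pi * \<i>)"
  have "?c * (2 * \<i> * of_nat p) = \<i> * complex_of_real (\<theta> * real p)" by simp
  also have "\<dots> = ?b" unfolding h by simp
  finally have arg: "?c * (x + 2 * \<i> * of_nat p) = ?c * x + ?b" by (simp add: distrib_left)
  have E: "exp ?b = (-1)^z" by (simp add: exp_of_nat_mult)
  have E': "exp (- ?b) = (-1)^z" unfolding exp_minus E by (rule inverse_unique, rule sq_sign)
  show ?thesis unfolding arg sinh_def exp_add minus_add_distrib E E'
    by (simp add: algebra_simps)
qed

lemma Q_shift:
  assumes h: "\<theta> * real p = pi * real z"
  shows "Qfun \<theta> m \<omega> (x + 2 * \<i> * of_nat p) = (-1)^(m*z) * Qfun \<theta> m \<omega> x"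
proof -
  have "Qfun \<theta> m \<omega> (x + 2 * \<i> * of_nat p) = (\<Prod>k=1..m. (-1)^z * sinh (complex_of_real (\<theta>/2) * (x - \<omega> k)))"
    unfolding Qfun_def
  proof (rule prod.cong)
    fix k
    have "x + 2 * \<i> * of_nat p - \<omega> k = (x - \<omega> k) + 2 * \<i> * of_nat p" by simp
    then show "sinh (complex_of_real (\<theta>/2) * (x + 2 * \<i> * of_nat p - \<omega> k)) = (-1)^z * sinh (complex_of_real (\<theta>/2) * (x - \<omega> k))"
      by (simp only: sinh_shift[OF h])
  qed simp
  also have "\<dots> = ((-1)^z)^m * Qfun \<theta> m \<omega> x" by (simp add: prod.distrib Qfun_def)
  also have "((-1::complex)^z)^m = (-1)^(m*z)" by (metis power_mult mult.commute)
  finally show ?thesis .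
qed

lemma phi_shift:
  assumes h: "\<theta> * real p = pi * real z"
  shows "phi \<theta> N (x + 2 * \<i> * of_nat p) = ((-1)^z)^(N div 2) * phi \<theta> N x"
  unfolding phi_def sinh_shift[OF h] by (metis power_mult_distrib times_divide_eq_right)

definition gfun :: "real \<Rightarrow> nat \<Rightarrow> complex \<Rightarrow> nat \<Rightarrow> (nat \<Rightarrow> complex) \<Rightarrow> complex \<Rightarrow> complex" where
  "gfun \<theta> N u m \<omega> w = phi \<theta> N (w - \<i> * (u + 1)) * phi \<theta> N (w + \<i> * (u + 1))
     * inverse (Qfun \<theta> m \<omega> (w + \<i>) * Qfun \<theta> m \<omega> (w - \<i>))"


lemma g_shift:
  assumes h: "\<theta> * real p = pi * real z"
  shows "gfun \<theta> N u m \<omega> (w + 2 * \<i> * of_nat p) = gfun \<theta> N u m \<omega> w"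
proof -
  have a1: "w + 2 * \<i> * of_nat p - \<i> * (u + 1) = (w - \<i> * (u + 1)) + 2 * \<i> * of_nat p" by simp
  have a2: "w + 2 * \<i> * of_nat p + \<i> * (u + 1) = (w + \<i> * (u + 1)) + 2 * \<i> * of_nat p" by simp
  have a3: "w + 2 * \<i> * of_nat p + \<i> = (w + \<i>) + 2 * \<i> * of_nat p" by simp
  have a4: "w + 2 * \<i> * of_nat p - \<i> = (w - \<i>) + 2 * \<i> * of_nat p" by simp
  let ?s = "((-1::complex)^z)^(N div 2)" and ?e = "(-1::complex)^(m*z)"
  have "gfun \<theta> N u m \<omega> (w + 2 * \<i> * of_nat p) =
     (?s * ?s) * (phi \<theta> N (w - \<i> * (u + 1)) * phi \<theta> N (w + \<i> * (u + 1)))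
     * inverse ((?e * ?e) * (Qfun \<theta> m \<omega> (w + \<i>) * Qfun \<theta> m \<omega> (w - \<i>)))"
    unfolding gfun_def a1 a2 a3 a4 phi_shift[OF h] Q_shift[OF h] by (simp add: mult_ac)
  also have "?s * ?s = 1" by (simp flip: power_mult_distrib)
  also have "?e * ?e = 1" by (rule sq_sign)
  finally show ?thesis by (simp add: gfun_def)
qed

lemma T_alt:
  "Tfun \<theta> N u m \<omega> n v = Qfun \<theta> m \<omega> (v + \<i> * of_nat n) * Qfun \<theta> m \<omega> (v - \<i> * of_nat n)
     * (\<Sum>j=1..n. gfun \<theta> N u m \<omega> (v + \<i> * of_int (2 * int j - int n - 1)))"
  unfolding Tfun_def sum_distrib_left
proof (rule sum.cong)
  fix j
  let ?w = "v + \<i> * of_int (2 * int j - int n - 1)"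
  have b1: "v - \<i> * (u + of_nat n + 2 - 2 * of_nat j) = ?w - \<i> * (u + 1)" by (simp add: algebra_simps)
  have b2: "v + \<i> * (u - of_nat n + 2 * of_nat j) = ?w + \<i> * (u + 1)" by (simp add: algebra_simps)
  have b3: "v + \<i> * (2 * of_nat j - of_nat n) = ?w + \<i>" by (simp add: algebra_simps)
  have b4: "v + \<i> * (2 * of_nat j - of_nat n - 2) = ?w - \<i>" by (simp add: algebra_simps)
  show "phi \<theta> N (v - \<i> * (u + of_nat n + 2 - 2 * of_nat j)) *
          phi \<theta> N (v + \<i> * (u - of_nat n + 2 * of_nat j)) *
          (Qfun \<theta> m \<omega> (v + \<i> * of_nat n) * Qfun \<theta> m \<omega> (v - \<i> * of_nat n)) /
          (Qfun \<theta> m \<omega> (v + \<i> * (2 * of_nat j - of_nat n)) *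
           Qfun \<theta> m \<omega> (v + \<i> * (2 * of_nat j - of_nat n - 2))) =
        Qfun \<theta> m \<omega> (v + \<i> * of_nat n) * Qfun \<theta> m \<omega> (v - \<i> * of_nat n) * gfun \<theta> N u m \<omega> ?w"
    unfolding b1 b2 b3 b4 gfun_def by (simp add: divide_inverse mult_ac)
qed simp


theorem mainTheorem2:
  fixes p0 :: real and \<alpha> :: nat and \<nu> :: "nat \<Rightarrow> nat"
    and N m :: nat and u :: complex and \<omega> :: "nat \<Rightarrow> complex"
  assumes "p0 \<in> \<rat>" and "p0 > 2"
    and "\<alpha> \<ge> 1" and "\<forall>j\<in>{1..\<alpha>}. \<nu> j \<ge> 1"
    and "p0 = cfr \<nu> 1 (\<alpha> - 1)"
    and "even N" and "N > 0"
    and "m \<le> N div 2"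
    and "\<forall>j\<in>{1..m}.
           - (((sinh (complex_of_real (pi/p0/2) * (\<omega> j + \<i> * (u + 2)))
               * sinh (complex_of_real (pi/p0/2) * (\<omega> j - \<i> * u)))
              / (sinh (complex_of_real (pi/p0/2) * (\<omega> j - \<i> * (u + 2)))
               * sinh (complex_of_real (pi/p0/2) * (\<omega> j + \<i> * u)))) ^ (N div 2))
           = Qfun (pi/p0) m \<omega> (\<omega> j + 2 * \<i>) / Qfun (pi/p0) m \<omega> (\<omega> j - 2 * \<i>)"
  shows "\<forall>v. (\<forall>k::int. Qfun (pi/p0) m \<omega> (v + \<i> * of_int k) \<noteq> 0) \<longrightarrow>
           Tfun (pi/p0) N u m \<omega> (ts_y \<nu> (\<alpha>+1) + ts_y \<nu> \<alpha>) v
         = Tfun (pi/p0) N u m \<omega> (ts_y \<nu> (\<alpha>+1) - ts_y \<nu> \<alpha>) v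
           + 2 * (-1) ^ (m * ts_z \<nu> (\<alpha>+1))
             * Tfun (pi/p0) N u m \<omega> (ts_y \<nu> \<alpha>) (v + \<i> * of_nat (ts_y \<nu> (\<alpha>+1)))"
  proof (intro allI impI)
  fix v :: complex
  define \<theta> where "\<theta> = pi / p0"
  define p where "p = ts_y \<nu> (\<alpha>+1)"
  define q where "q = ts_y \<nu> \<alpha>"
  define z where "z = ts_z \<nu> (\<alpha>+1)"
  obtain a where a: "\<alpha> = Suc a" using assms(3) by (cases \<alpha>) auto
  have hnu: "\<forall>j\<in>{1..Suc a}. \<nu> j \<ge> 1" using assms(4) a by simp
  have cf: "p0 = real p / real z"
    using assms(5) cfr_ts[OF hnu] a by (simp add: p_def z_def)
  have hs: "\<forall>j\<in>{1..a}. (\<lambda>j. \<nu> (Suc j)) j \<ge> 1" using hnu by auto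
  have "z = ts_y (\<lambda>j. \<nu> (Suc j)) (Suc a)"
    using ts_shift[of \<nu> "Suc a"] a by (simp add: z_def)
  then have zpos: "z \<ge> 1" using ts_y_pos[OF hs] by simp
  have ppos: "p > 0"
  proof (rule ccontr)
    assume "\<not> p > 0" then have "p = 0" by simp
    then have "p0 = 0" using cf by simp
    then show False using assms(2) by simp
  qed
  have h: "\<theta> * real p = pi * real z"
    using zpos ppos unfolding \<theta>_def cf by (simp add: field_simps)
  have "p = ts_y \<nu> a + \<nu> (Suc a) * ts_y \<nu> (Suc a)" using a by (simp add: p_def)
  moreover have "\<nu> (Suc a) \<ge> 1" using hnu by auto
  ultimately have "q \<le> p" using a unfolding q_def
    by (metis le_add2 le_trans mult_le_mono1 nat_mult_1)
  then obtain r where pr: "p = q + r" using le_Suc_ex by blast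
  let ?Q = "Qfun \<theta> m \<omega>"
  let ?g = "gfun \<theta> N u m \<omega>"
  define hh where "hh = (\<lambda>k::int. ?g (v + \<i> * of_int k))"
  have per: "\<And>k. hh (k + 2 * int p) = hh k"
  proof -
    fix k
    have "v + \<i> * of_int (k + 2 * int p) = (v + \<i> * of_int k) + 2 * \<i> * of_nat p"
      by (simp add: algebra_simps)
    then show "hh (k + 2 * int p) = hh k" unfolding hh_def by (simp only: g_shift[OF h])
  qed
  have C: "(\<Sum>j=1..q+r+q. hh (2*int j - int (q+r+q) - 1))
       = (\<Sum>j=1..r. hh (2*int j - int r - 1)) + 2 * (\<Sum>j=1..q. hh (int p + 2*int j - int q - 1))"
    by (rule comb[where h=hh, OF per pr])
  let ?e = "(-1::complex)^(m*z)"
  have ee: "?e * ?e = 1" by (rule sq_sign)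
  define A where "A = ?Q (v + \<i> * of_nat (q+r+q))"
  define B where "B = ?Q (v + \<i> * of_nat r)"
  have QL: "?Q (v - \<i> * of_nat (q+r+q)) = ?e * B"
  proof -
    have "v - \<i> * of_nat (q+r+q) + 2 * \<i> * of_nat p = v + \<i> * of_nat r" by (simp add: pr algebra_simps)
    then have "B = ?Q (v - \<i> * of_nat (q+r+q) + 2 * \<i> * of_nat p)"
      unfolding B_def by (simp only:)
    also have "\<dots> = ?e * ?Q (v - \<i> * of_nat (q+r+q))" by (rule Q_shift[OF h])
    finally have "B = ?e * ?Q (v - \<i> * of_nat (q+r+q))" .
    then have "?e * B = (?e * ?e) * ?Q (v - \<i> * of_nat (q+r+q))" by (simp add: mult.assoc)
    then show ?thesis using ee by simp
  qed
  have QR: "?Q (v - \<i> * of_nat r) = ?e * A"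
  proof -
    have "v - \<i> * of_nat r + 2 * \<i> * of_nat p = v + \<i> * of_nat (q+r+q)" by (simp add: pr algebra_simps)
    then have "A = ?Q (v - \<i> * of_nat r + 2 * \<i> * of_nat p)"
      unfolding A_def by (simp only:)
    also have "\<dots> = ?e * ?Q (v - \<i> * of_nat r)" by (rule Q_shift[OF h])
    finally have "A = ?e * ?Q (v - \<i> * of_nat r)" .
    then have "?e * A = (?e * ?e) * ?Q (v - \<i> * of_nat r)" by (simp add: mult.assoc)
    then show ?thesis using ee by simp
  qed
  have Q3a: "?Q (v + \<i> * of_nat p + \<i> * of_nat q) = A"
    unfolding A_def by (simp add: pr algebra_simps)
  have Q3b: "?Q (v + \<i> * of_nat p - \<i> * of_nat q) = B"
    unfolding B_def by (simp add: pr algebra_simps)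
  have T1: "Tfun \<theta> N u m \<omega> (q+r+q) v = A * (?e * B) * (\<Sum>j=1..q+r+q. hh (2*int j - int (q+r+q) - 1))"
    unfolding T_alt QL A_def hh_def ..
  have T2: "Tfun \<theta> N u m \<omega> r v = B * (?e * A) * (\<Sum>j=1..r. hh (2*int j - int r - 1))"
    unfolding T_alt QR B_def hh_def ..
  have S3: "(\<Sum>j=1..q. ?g (v + \<i> * of_nat p + \<i> * of_int (2 * int j - int q - 1)))
      = (\<Sum>j=1..q. hh (int p + 2*int j - int q - 1))"
    unfolding hh_def by (rule sum.cong) (simp_all add: algebra_simps)
  have T3: "Tfun \<theta> N u m \<omega> q (v + \<i> * of_nat p) = A * B * (\<Sum>j=1..q. hh (int p + 2*int j - int q - 1))"
    unfolding T_alt Q3a Q3b S3 ..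
  have pq1: "p + q = q+r+q" using pr by simp
  have pq2: "p - q = r" using pr by simp
  have pq3: "ts_y \<nu> \<alpha> = q" "ts_y \<nu> (\<alpha>+1) = p" "ts_z \<nu> (\<alpha>+1) = z" using p_def q_def z_def by simp_all
  show "Tfun (pi/p0) N u m \<omega> (ts_y \<nu> (\<alpha>+1) + ts_y \<nu> \<alpha>) v
         = Tfun (pi/p0) N u m \<omega> (ts_y \<nu> (\<alpha>+1) - ts_y \<nu> \<alpha>) v
           + 2 * (-1) ^ (m * ts_z \<nu> (\<alpha>+1))
             * Tfun (pi/p0) N u m \<omega> (ts_y \<nu> \<alpha>) (v + \<i> * of_nat (ts_y \<nu> (\<alpha>+1)))"
    unfolding pq3 unfolding pq1 pq2 \<theta>_def[symmetric] T1 T2 T3 C by (simp add: algebra_simps)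
qed

end
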